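(* For repeated non-credible second-price auctions with known credibility $\alpha_0$ and unknown distribution $G$, there exists a constant $c>0$ such that $$\inf_{\pi}\sup_{G}\mathrm{Regret}(\pi)\ge c\cdot(1-\alpha_0)\sqrt{T},$$ and this holds even in the special case where $v_t\equiv1$ for all $t$ and the feedback is full feedback.
   Context: Setting: rounds $t=1,\dots,T$; values $v_t\in[0,1]$ i.i.d. from a distribution $F$; highest competing bids $d_t\in\mathbb{R}_+$ i.i.d. from a distribution $G$ (CDF $G$), independent of the values. The bidder bids $b_t\ge0$; $x_t=\mathbb{I}\{b_t\ge d_t\}$; if she wins she pays $p_t=\alpha_0d_t+(1-\alpha_0)b_t$ with fixed $\alpha_0\in[0,1]$; cost $c_t=x_tp_t$, reward $r_t=x_tv_t-c_t$. Full feedback: before round $t$ the bidder knows $(v_s,x_s,p_s)_{s=1}^{t-1}$. The infimum is over bidding strategies $\pi$, which may use $\alpha_0$ but not $G$, and the supremum over distributions $G$ (supported on $[0,1]$). Define $r(v,b,\alpha)=(v-b)G(b)+\alpha\int_0^bG(y)\,dy$, $b^*(v,\alpha)=\arg\max_b r(v,b,\alpha)$ (largest maximizer in case of ties), and $\mathrm{Regret}(\pi)=\mathbb{E}\big[\sum_{t=1}^T r(v_t,b^*(v_t,\alpha_0),\alpha_0)-\sum_{t=1}^T r(v_t,b_t^\pi,\alpha_0)\big]$. *)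

theory Defs
  imports "HOL-Probability.Probability"
begin

definition cdfG :: "real measure \<Rightarrow> real \<Rightarrow> real" where
  "cdfG G b = measure G {..b}"

definition rew :: "real measure \<Rightarrow> real \<Rightarrow> real \<Rightarrow> real \<Rightarrow> real" where
  "rew G v b \<alpha> = (v - b) * cdfG G b + \<alpha> * integral {0..b} (\<lambda>y. cdfG G y)"

definition bstar :: "real measure \<Rightarrow> real \<Rightarrow> real \<Rightarrow> real" where
  "bstar G v \<alpha> = (GREATEST b. 0 \<le> b \<and> (\<forall>b'\<ge>0. rew G v b' \<alpha> \<le> rew G v b \<alpha>))"

text \<open>The bid in round t
  (rounds indexed 0..T-1) is  pi t (u, d)  where u is an independent uniform
  random seed in [0,1] and d is the sequence of highest competing bids; the bid may
  only depend on d s for s < t (full feedback), must be nonnegative and measurable.\<close>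
definition admissible_strategy :: "(nat \<Rightarrow> real \<times> (nat \<Rightarrow> real) \<Rightarrow> real) \<Rightarrow> bool" where
  "admissible_strategy \<pi> \<longleftrightarrow>
     (\<forall>t. \<pi> t \<in> borel_measurable (borel \<Otimes>\<^sub>M PiM UNIV (\<lambda>_::nat. borel)))
   \<and> (\<forall>t u d. 0 \<le> \<pi> t (u, d))
   \<and> (\<forall>t u d d'. (\<forall>s<t. d s = d' s) \<longrightarrow> \<pi> t (u, d) = \<pi> t (u, d'))"

definition comp_dists :: "real measure set" where
  "comp_dists = {G. prob_space G \<and> sets G = sets borel \<and> measure G {0..1} = 1}"

definition env :: "real measure \<Rightarrow> (real \<times> (nat \<Rightarrow> real)) measure" where
  "env G = uniform_measure lborel {0..1} \<Otimes>\<^sub>M PiM UNIV (\<lambda>_::nat. G)"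

text \<open>Regret with values v_t = 1.  The per-round gap is nonnegative (b* maximises r),
  so the expectation is taken as a nonnegative (ennreal) integral.\<close>
definition regret :: "(nat \<Rightarrow> real \<times> (nat \<Rightarrow> real) \<Rightarrow> real) \<Rightarrow> real measure \<Rightarrow> real \<Rightarrow> nat \<Rightarrow> ennreal" where
  "regret \<pi> G \<alpha> T = (\<Sum>t<T. \<integral>\<^sup>+ \<omega>. ennreal (rew G 1 (bstar G 1 \<alpha>) \<alpha> - rew G 1 (\<pi> t \<omega>) \<alpha>) \<partial>env G)"

end

theory Submission
  imports Defs
begin

lemma sqrt_prod_real: "finite A \<Longrightarrow> sqrt (\<Prod>i\<in>A. f i) = (\<Prod>i\<in>A. sqrt (f i :: real))"
  by (induction A rule: finite_induct) (auto simp: real_sqrt_mult)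

lemma comb_bound:
  fixes a b :: "real \<Rightarrow> real" and D :: "real set" and t :: nat
  assumes fin: "finite D"
    and a0: "\<And>y. y \<in> D \<Longrightarrow> 0 \<le> a y" and b0: "\<And>y. y \<in> D \<Longrightarrow> 0 \<le> b y"
    and a1: "(\<Sum>y\<in>D. a y) = 1" and b1: "(\<Sum>y\<in>D. b y) = 1"
  shows "(\<Sum>y\<in>D. sqrt (a y * b y)) ^ (2*t) \<le>
           2 * (\<Sum>x\<in>PiE {..<t} (\<lambda>_. D). min (\<Prod>s<t. a (x s)) (\<Prod>s<t. b (x s)))"
proof -
  define X where "X = PiE {..<t} (\<lambda>_. D)"
  define A where "A x = (\<Prod>s<t. a (x s))" for x
  define B where "B x = (\<Prod>s<t. b (x s))" for x
  have finX: "finite X" unfolding X_def using fin by (simp add: finite_PiE)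
  have A0: "0 \<le> A x" "0 \<le> B x" if "x \<in> X" for x
    using that a0 b0 unfolding A_def B_def X_def by (auto intro!: prod_nonneg simp: PiE_iff)
  have sA: "sum A X = 1"
    using prod_sum_PiE[of "{..<t}" "\<lambda>_. D" "\<lambda>_. a"] fin a1 unfolding A_def X_def by simp
  have sB: "sum B X = 1"
    using prod_sum_PiE[of "{..<t}" "\<lambda>_. D" "\<lambda>_. b"] fin b1 unfolding B_def X_def by simp
  have rho: "(\<Sum>y\<in>D. sqrt (a y * b y)) ^ t = (\<Sum>x\<in>X. sqrt (A x * B x))"
  proof -
    have "(\<Sum>y\<in>D. sqrt (a y * b y)) ^ t = (\<Prod>s<t. \<Sum>y\<in>D. sqrt (a y * b y))" by simp
    also have "\<dots> = (\<Sum>x\<in>X. \<Prod>s<t. sqrt (a (x s) * b (x s)))"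
      unfolding X_def by (rule prod_sum_PiE) (use fin in auto)
    also have "\<dots> = (\<Sum>x\<in>X. sqrt (A x * B x))"
      unfolding A_def B_def by (simp add: sqrt_prod_real prod.distrib[symmetric] real_sqrt_mult)
    finally show ?thesis .
  qed
  have eq: "sqrt (A x * B x) = sqrt (min (A x) (B x)) * sqrt (max (A x) (B x))" for x
    by (simp add: real_sqrt_mult[symmetric] min_def max_def mult.commute)
  have "(\<Sum>x\<in>X. sqrt (A x * B x))^2 \<le> (\<Sum>x\<in>X. (sqrt (min (A x) (B x)))^2) * (\<Sum>x\<in>X. (sqrt (max (A x) (B x)))^2)"
    unfolding eq by (rule Cauchy_Schwarz_ineq_sum)
  also have "\<dots> = (\<Sum>x\<in>X. min (A x) (B x)) * (\<Sum>x\<in>X. max (A x) (B x))"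
    using A0 by (intro arg_cong2[where f="(*)"] sum.cong) (auto simp: le_max_iff_disj)
  also have "\<dots> \<le> (\<Sum>x\<in>X. min (A x) (B x)) * 2"
  proof (rule mult_left_mono)
    have "(\<Sum>x\<in>X. max (A x) (B x)) \<le> (\<Sum>x\<in>X. A x + B x)"
      using A0 by (intro sum_mono) auto
    also have "\<dots> = 2" using sA sB by (simp add: sum.distrib)
    finally show "(\<Sum>x\<in>X. max (A x) (B x)) \<le> 2" .
    show "0 \<le> (\<Sum>x\<in>X. min (A x) (B x))" using A0 by (intro sum_nonneg) auto
  qed
  finally have "(\<Sum>x\<in>X. sqrt (A x * B x))^2 \<le> 2 * (\<Sum>x\<in>X. min (A x) (B x))" by simp
  moreover have "(\<Sum>y\<in>D. sqrt (a y * b y)) ^ (2*t) = (\<Sum>x\<in>X. sqrt (A x * B x))^2"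
    unfolding rho[symmetric] by (simp add: power_mult[symmetric] mult.commute)
  ultimately show ?thesis unfolding X_def A_def B_def by simp
qed

lemma cyl_bound:
  fixes G1 G2 :: "real measure" and D :: "real set" and t :: nat and B :: "(nat \<Rightarrow> real) set"
  assumes P1: "prob_space G1" and P2: "prob_space G2"
    and S1: "sets G1 = sets borel" and S2: "sets G2 = sets borel" and fin: "finite D"
    and Bm: "B \<in> sets (PiM UNIV (\<lambda>_::nat. borel))"
    and dep: "\<And>d d'. (\<forall>s<t. d s = d' s) \<Longrightarrow> d \<in> B \<Longrightarrow> d' \<in> B"
  shows "(\<Sum>x\<in>PiE {..<t} (\<lambda>_. D). min (\<Prod>s<t. measure G1 {x s}) (\<Prod>s<t. measure G2 {x s}))
          \<le> measure (PiM UNIV (\<lambda>_. G1)) B + measure (PiM UNIV (\<lambda>_. G2)) (UNIV - B)"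
proof -
  define X where "X = PiE {..<t} (\<lambda>_::nat. D)"
  define C where "C x = {d::nat\<Rightarrow>real. \<forall>s<t. d s = x s}" for x :: "nat \<Rightarrow> real"
  define X1 where "X1 = {x\<in>X. C x \<subseteq> B}"
  define X2 where "X2 = X - X1"
  have finX: "finite X" unfolding X_def using fin by (simp add: finite_PiE)
  have sp1: "space G1 = UNIV" using S1 sets_eq_imp_space_eq by fastforce
  have sp2: "space G2 = UNIV" using S2 sets_eq_imp_space_eq by fastforce
  have Cemb: "C x = prod_emb UNIV (\<lambda>_. G) {..<t} (PiE {..<t} (\<lambda>s. {x s}))"
    if "x \<in> X" "space G = UNIV" for x G
    using that unfolding C_def X_def prod_emb_def by (auto simp: PiE_iff restrict_def extensional_def fun_eq_iff)
  have Cmeas: "emeasure (PiM UNIV (\<lambda>_. G)) (C x) = (\<Prod>s<t. emeasure G {x s})"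
    if "x \<in> X" "space G = UNIV" "prob_space G" "sets G = sets borel" for x G
    unfolding Cemb[OF that(1,2)]
    by (rule emeasure_PiM_emb) (use that in auto)
  have Csets: "C x \<in> sets (PiM UNIV (\<lambda>_. G))"
    if "x \<in> X" "space G = UNIV" "sets G = sets borel" for x G
    unfolding Cemb[OF that(1,2)]
    by (intro measurable_prod_emb sets_PiM_I_finite) (use that in auto)
  have disj: "disjoint_family_on C Y" if "Y \<subseteq> X" for Y
    unfolding disjoint_family_on_def C_def
  proof (intro ballI impI)
    fix x y assume xy: "x \<in> Y" "y \<in> Y" "x \<noteq> y"
    then obtain s where "x s \<noteq> y s" by auto
    moreover have "s < t"
    proof (rule ccontr)
      assume "\<not> s < t"
      then have "s \<notin> {..<t}" by simp
      moreover have "x \<in> extensional {..<t}" "y \<in> extensional {..<t}" using xy that unfolding X_def by (auto simp: PiE_iff)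
      ultimately have "x s = y s" by (metis extensional_arb)
      with \<open>x s \<noteq> y s\<close> show False by simp
    qed
    ultimately show "{d. \<forall>s<t. d s = x s} \<inter> {d. \<forall>s<t. d s = y s} = {}" by auto
  qed
  have X2sub: "C x \<subseteq> UNIV - B" if "x \<in> X2" for x
  proof -
    from that obtain d where d: "d \<in> C x" "d \<notin> B" unfolding X2_def X1_def by auto
    show ?thesis
    proof
      fix d' assume "d' \<in> C x"
      with d have "\<forall>s<t. d' s = d s" unfolding C_def by auto
      with d dep show "d' \<in> UNIV - B" by blast
    qed
  qed
  have pr: "prob_space (PiM UNIV (\<lambda>_::nat. G))" if "prob_space G" for G :: "real measure"
    by (rule prob_space_PiM) (use that in auto)
  have setsP: "sets (PiM UNIV (\<lambda>_::nat. G)) = sets (PiM UNIV (\<lambda>_::nat. borel))" if "sets G = sets borel" for G :: "real measure"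
    by (rule sets_PiM_cong) (use that in auto)
  have mC: "measure (PiM UNIV (\<lambda>_. G)) (C x) = (\<Prod>s<t. measure G {x s})"
    if "x \<in> X" "space G = UNIV" "prob_space G" "sets G = sets borel" for x G
  proof -
    interpret prob_space G by fact
    interpret Q: prob_space "PiM UNIV (\<lambda>_::nat. G)" by (rule pr) fact
    have "ennreal (measure (PiM UNIV (\<lambda>_. G)) (C x)) = ennreal (\<Prod>s<t. measure G {x s})"
      using Cmeas[OF that] by (simp add: Q.emeasure_eq_measure emeasure_eq_measure prod_ennreal)
    then show ?thesis by (simp add: prod_nonneg)
  qed
  interpret Q1: prob_space "PiM UNIV (\<lambda>_::nat. G1)" by (rule pr) fact
  interpret Q2: prob_space "PiM UNIV (\<lambda>_::nat. G2)" by (rule pr) fact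
  have "(\<Sum>x\<in>X. min (\<Prod>s<t. measure G1 {x s}) (\<Prod>s<t. measure G2 {x s}))
      = (\<Sum>x\<in>X1. min (\<Prod>s<t. measure G1 {x s}) (\<Prod>s<t. measure G2 {x s}))
      + (\<Sum>x\<in>X2. min (\<Prod>s<t. measure G1 {x s}) (\<Prod>s<t. measure G2 {x s}))"
    unfolding X2_def using finX by (subst sum.subset_diff[of X1 X]) (auto simp: X1_def)
  also have "\<dots> \<le> (\<Sum>x\<in>X1. measure (PiM UNIV (\<lambda>_. G1)) (C x)) + (\<Sum>x\<in>X2. measure (PiM UNIV (\<lambda>_. G2)) (C x))"
    by (intro add_mono sum_mono) (auto simp: mC sp1 sp2 P1 P2 S1 S2 X1_def X2_def)
  also have "(\<Sum>x\<in>X1. measure (PiM UNIV (\<lambda>_. G1)) (C x)) = measure (PiM UNIV (\<lambda>_. G1)) (\<Union>x\<in>X1. C x)"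
    using finX disj[of X1] Csets[OF _ sp1 S1]
    by (intro Q1.finite_measure_finite_Union[symmetric]) (auto simp: X1_def)
  also have "\<dots> \<le> measure (PiM UNIV (\<lambda>_. G1)) B"
    using Bm setsP[OF S1] Csets[OF _ sp1 S1] finX
    by (intro Q1.finite_measure_mono) (auto simp: X1_def)
  also have "(\<Sum>x\<in>X2. measure (PiM UNIV (\<lambda>_. G2)) (C x)) = measure (PiM UNIV (\<lambda>_. G2)) (\<Union>x\<in>X2. C x)"
    using finX disj[of X2] Csets[OF _ sp2 S2]
    by (intro Q2.finite_measure_finite_Union[symmetric]) (auto simp: X2_def)
  also have "\<dots> \<le> measure (PiM UNIV (\<lambda>_. G2)) (UNIV - B)"
  proof -
    have spQ: "space (PiM UNIV (\<lambda>_::nat. G2)) = UNIV" by (simp add: space_PiM sp2)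
    have Bq: "B \<in> sets (PiM UNIV (\<lambda>_::nat. G2))" using Bm setsP[OF S2] by simp
    have "space (PiM UNIV (\<lambda>_::nat. G2)) - B \<in> sets (PiM UNIV (\<lambda>_::nat. G2))"
      using Bq by (intro sets.Diff sets.top)
    then have "UNIV - B \<in> sets (PiM UNIV (\<lambda>_::nat. G2))" using spQ by simp
    then show ?thesis
      using X2sub by (intro Q2.finite_measure_mono) auto
  qed
  finally show ?thesis unfolding X_def by auto
qed

lemma env_facts:
  fixes G :: "real measure"
  assumes "prob_space G" "sets G = sets borel"
  shows "sets (env G) = sets (borel \<Otimes>\<^sub>M PiM UNIV (\<lambda>_::nat. borel))"
    and "space (env G) = UNIV"
    and "prob_space (PiM UNIV (\<lambda>_::nat. G))"
proof -
  have sP: "sets (PiM UNIV (\<lambda>_::nat. G)) = sets (PiM UNIV (\<lambda>_::nat. borel))"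
    by (rule sets_PiM_cong) (use assms in auto)
  have sU: "sets (uniform_measure lborel {0..1::real}) = sets borel" by simp
  show "sets (env G) = sets (borel \<Otimes>\<^sub>M PiM UNIV (\<lambda>_::nat. borel))"
    unfolding env_def by (rule sets_pair_measure_cong[OF sU sP])
  have spG: "space G = UNIV" using assms(2) sets_eq_imp_space_eq by fastforce
  show "space (env G) = UNIV"
    unfolding env_def by (simp add: space_pair_measure space_PiM spG)
  show "prob_space (PiM UNIV (\<lambda>_::nat. G))"
    by (rule prob_space_PiM) (use assms in auto)
qed

lemma env_bound:
  fixes G1 G2 :: "real measure" and L h :: real
  assumes adm: "admissible_strategy \<pi>"
    and P1: "prob_space G1" and P2: "prob_space G2"
    and S1: "sets G1 = sets borel" and S2: "sets G2 = sets borel"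
    and cyl: "\<And>B. B \<in> sets (PiM UNIV (\<lambda>_::nat. borel)) \<Longrightarrow>
               (\<And>d d'. (\<forall>s<t. d s = d' s) \<Longrightarrow> d \<in> B \<Longrightarrow> d' \<in> B) \<Longrightarrow>
               L \<le> measure (PiM UNIV (\<lambda>_. G1)) B + measure (PiM UNIV (\<lambda>_. G2)) (UNIV - B)"
  shows "ennreal L \<le> emeasure (env G1) {\<omega>. h \<le> \<pi> t \<omega>} + emeasure (env G2) {\<omega>. \<pi> t \<omega> < h}"
proof -
  define U where "U = uniform_measure lborel {0..1::real}"
  have PU: "prob_space U" unfolding U_def by (rule prob_space_uniform_measure) auto
  interpret Q1: prob_space "PiM UNIV (\<lambda>_::nat. G1)" using env_facts(3)[OF P1 S1] .
  interpret Q2: prob_space "PiM UNIV (\<lambda>_::nat. G2)" using env_facts(3)[OF P2 S2] .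
  have envU: "env G = U \<Otimes>\<^sub>M PiM UNIV (\<lambda>_::nat. G)" for G unfolding env_def U_def ..
  have mpi: "\<pi> t \<in> borel_measurable (borel \<Otimes>\<^sub>M PiM UNIV (\<lambda>_::nat. borel))"
    using adm unfolding admissible_strategy_def by blast
  have dep: "\<pi> t (u, d) = \<pi> t (u, d')" if "\<forall>s<t. d s = d' s" for u d d'
    using adm that unfolding admissible_strategy_def by blast
  define A1 where "A1 = {\<omega>. h \<le> \<pi> t \<omega>}"
  define A2 where "A2 = {\<omega>. \<pi> t \<omega> < h}"
  have A1s: "A1 \<in> sets (borel \<Otimes>\<^sub>M PiM UNIV (\<lambda>_::nat. borel))"
  proof -
    have "\<pi> t -` {h..} \<inter> space (borel \<Otimes>\<^sub>M PiM UNIV (\<lambda>_::nat. borel)) \<in> sets (borel \<Otimes>\<^sub>M PiM UNIV (\<lambda>_::nat. borel))"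
      using mpi by (rule measurable_sets) simp
    moreover have "\<pi> t -` {h..} \<inter> space (borel \<Otimes>\<^sub>M PiM UNIV (\<lambda>_::nat. borel)) = A1"
      unfolding A1_def by (auto simp: space_pair_measure space_PiM)
    ultimately show ?thesis by simp
  qed
  have A2s: "A2 \<in> sets (borel \<Otimes>\<^sub>M PiM UNIV (\<lambda>_::nat. borel))"
  proof -
    have "\<pi> t -` {..<h} \<inter> space (borel \<Otimes>\<^sub>M PiM UNIV (\<lambda>_::nat. borel)) \<in> sets (borel \<Otimes>\<^sub>M PiM UNIV (\<lambda>_::nat. borel))"
      using mpi by (rule measurable_sets) simp
    moreover have "\<pi> t -` {..<h} \<inter> space (borel \<Otimes>\<^sub>M PiM UNIV (\<lambda>_::nat. borel)) = A2"
      unfolding A2_def by (auto simp: space_pair_measure space_PiM)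
    ultimately show ?thesis by simp
  qed
  have e1: "emeasure (env G1) A1 = (\<integral>\<^sup>+u. emeasure (PiM UNIV (\<lambda>_::nat. G1)) (Pair u -` A1) \<partial>U)"
    unfolding envU by (rule Q1.emeasure_pair_measure_alt) (use A1s env_facts(1)[OF P1 S1] envU in simp)
  have e2: "emeasure (env G2) A2 = (\<integral>\<^sup>+u. emeasure (PiM UNIV (\<lambda>_::nat. G2)) (Pair u -` A2) \<partial>U)"
    unfolding envU by (rule Q2.emeasure_pair_measure_alt) (use A2s env_facts(1)[OF P2 S2] envU in simp)
  have m1: "(\<lambda>u. emeasure (PiM UNIV (\<lambda>_::nat. G1)) (Pair u -` A1)) \<in> borel_measurable U"
    by (rule Q1.measurable_emeasure_Pair) (use A1s env_facts(1)[OF P1 S1] envU in simp)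
  have m2: "(\<lambda>u. emeasure (PiM UNIV (\<lambda>_::nat. G2)) (Pair u -` A2)) \<in> borel_measurable U"
    by (rule Q2.measurable_emeasure_Pair) (use A2s env_facts(1)[OF P2 S2] envU in simp)
  have pt: "ennreal L \<le> emeasure (PiM UNIV (\<lambda>_::nat. G1)) (Pair u -` A1) + emeasure (PiM UNIV (\<lambda>_::nat. G2)) (Pair u -` A2)" for u
  proof -
    define B where "B = Pair u -` A1"
    have Bs: "B \<in> sets (PiM UNIV (\<lambda>_::nat. borel))" unfolding B_def using A1s by (rule sets_Pair1)
    have c: "Pair u -` A2 = UNIV - B" unfolding B_def A1_def A2_def by auto
    have "L \<le> measure (PiM UNIV (\<lambda>_. G1)) B + measure (PiM UNIV (\<lambda>_. G2)) (UNIV - B)"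
    proof (rule cyl[OF Bs])
      fix d d' :: "nat \<Rightarrow> real" assume "\<forall>s<t. d s = d' s" "d \<in> B"
      then show "d' \<in> B" unfolding B_def A1_def using dep[of d d' u] by simp
    qed
    then have "ennreal L \<le> ennreal (measure (PiM UNIV (\<lambda>_. G1)) B + measure (PiM UNIV (\<lambda>_. G2)) (UNIV - B))"
      by (rule ennreal_leI)
    also have "\<dots> = emeasure (PiM UNIV (\<lambda>_::nat. G1)) B + emeasure (PiM UNIV (\<lambda>_::nat. G2)) (UNIV - B)"
      by (simp add: Q1.emeasure_eq_measure Q2.emeasure_eq_measure ennreal_plus)
    finally show ?thesis unfolding c B_def .
  qed
  have "ennreal L = (\<integral>\<^sup>+u. ennreal L \<partial>U)"
    using prob_space.emeasure_space_1[OF PU] by (simp add: nn_integral_const)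
  also have "\<dots> \<le> (\<integral>\<^sup>+u. emeasure (PiM UNIV (\<lambda>_::nat. G1)) (Pair u -` A1) + emeasure (PiM UNIV (\<lambda>_::nat. G2)) (Pair u -` A2) \<partial>U)"
    by (intro nn_integral_mono pt)
  also have "\<dots> = emeasure (env G1) A1 + emeasure (env G2) A2"
    unfolding e1 e2 by (rule nn_integral_add[OF m1 m2])
  finally show ?thesis unfolding A1_def A2_def .
qed

definition Gp :: "real \<Rightarrow> real measure" where
  "Gp p = distr (measure_pmf (bernoulli_pmf p)) borel (\<lambda>b. if b then 0 else 1/2)"

lemma Gp_prob: "prob_space (Gp p)"
  unfolding Gp_def by (rule prob_space.prob_space_distr) (auto simp: measure_pmf.prob_space_axioms)

lemma Gp_sets: "sets (Gp p) = sets borel"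
  unfolding Gp_def by simp

lemma Gp_measure:
  assumes p: "0 \<le> p" "p \<le> 1" and A: "A \<in> sets borel"
  shows "measure (Gp p) A = (if (0::real) \<in> A then p else 0) + (if (1/2::real) \<in> A then 1 - p else 0)"
proof -
  define f where "f = (\<lambda>b::bool. if b then 0 else 1/2::real)"
  have "measure (Gp p) A = measure (measure_pmf (bernoulli_pmf p)) (f -` A \<inter> UNIV)"
    unfolding Gp_def f_def by (subst measure_distr) (use A in auto)
  also have "\<dots> = sum (pmf (bernoulli_pmf p)) (f -` A)"
    by (simp add: measure_measure_pmf_finite)
  also have "\<dots> = (if (0::real) \<in> A then p else 0) + (if (1/2::real) \<in> A then 1 - p else 0)"
  proof (cases "(0::real) \<in> A"; cases "(1/2::real) \<in> A")
    assume "(0::real) \<in> A" "(1/2::real) \<in> A"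
    then have "f -` A = {True, False}" unfolding f_def by (auto split: if_splits)
    then show ?thesis using p \<open>(0::real) \<in> A\<close> \<open>(1/2::real) \<in> A\<close> by simp
  next
    assume "(0::real) \<in> A" "(1/2::real) \<notin> A"
    then have "f -` A = {True}" unfolding f_def by (auto split: if_splits)
    then show ?thesis using p \<open>(0::real) \<in> A\<close> \<open>(1/2::real) \<notin> A\<close> by simp
  next
    assume "(0::real) \<notin> A" "(1/2::real) \<in> A"
    then have "f -` A = {False}" unfolding f_def by (auto split: if_splits)
    then show ?thesis using p \<open>(0::real) \<notin> A\<close> \<open>(1/2::real) \<in> A\<close> by simp
  next
    assume "(0::real) \<notin> A" "(1/2::real) \<notin> A"
    then have "f -` A = {}" unfolding f_def by (auto split: if_splits)
    then show ?thesis using p \<open>(0::real) \<notin> A\<close> \<open>(1/2::real) \<notin> A\<close> by simp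
  qed
  finally show ?thesis .
qed

lemma Gp_comp: "0 \<le> p \<Longrightarrow> p \<le> 1 \<Longrightarrow> Gp p \<in> comp_dists"
  unfolding comp_dists_def using Gp_prob Gp_sets Gp_measure[of p "{0..1}"] by auto

lemma Gp_cdf: "0 \<le> p \<Longrightarrow> p \<le> 1 \<Longrightarrow> cdfG (Gp p) y = (if y < 0 then 0 else if y < 1/2 then p else 1)"
  unfolding cdfG_def by (subst Gp_measure) auto

lemma Gp_rew_low:
  assumes p: "0 \<le> p" "p \<le> 1" and b: "0 \<le> b" "b < 1/2"
  shows "rew (Gp p) 1 b \<alpha> = (1 - b) * p + \<alpha> * (p * b)"
proof -
  have h0: "((\<lambda>y. p) has_integral (b * p)) {0..b}" using has_integral_const_real[of p 0 b] b by simp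
  have "((\<lambda>y. cdfG (Gp p) y) has_integral (b * p)) {0..b}"
  proof (rule has_integral_eq[OF _ h0])
    fix x assume "x \<in> {0..b}"
    then show "p = cdfG (Gp p) x" using b by (simp add: Gp_cdf[OF p])
  qed
  then have "integral {0..b} (\<lambda>y. cdfG (Gp p) y) = p * b" by (simp add: integral_unique mult.commute)
  moreover have "cdfG (Gp p) b = p" using b by (simp add: Gp_cdf[OF p])
  ultimately show ?thesis unfolding rew_def by simp
qed

lemma Gp_rew_high:
  assumes p: "0 \<le> p" "p \<le> 1" and b: "1/2 \<le> b"
  shows "rew (Gp p) 1 b \<alpha> = (1 - b) + \<alpha> * (p / 2 + (b - 1/2))"
proof -
  have h1: "((\<lambda>y. p) has_integral (p/2)) {0..1/2::real}" using has_integral_const_real[of p 0 "1/2"] by simp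
  have i1: "((\<lambda>y. cdfG (Gp p) y) has_integral (p/2)) {0..1/2}"
  proof (rule has_integral_spike_finite[where S="{1/2}", OF _ _ h1])
    fix x assume "x \<in> {0..1/2} - {1/2::real}"
    then show "cdfG (Gp p) x = p" by (simp add: Gp_cdf[OF p])
  qed simp
  have h2: "((\<lambda>y. 1::real) has_integral (b - 1/2)) {1/2..b}" using has_integral_const_real[of "1::real" "1/2" b] b by simp
  have i2: "((\<lambda>y. cdfG (Gp p) y) has_integral (b - 1/2)) {1/2..b}"
  proof (rule has_integral_eq[OF _ h2])
    fix x assume "x \<in> {1/2..b}"
    then show "1 = cdfG (Gp p) x" by (simp add: Gp_cdf[OF p])
  qed
  have "((\<lambda>y. cdfG (Gp p) y) has_integral (p/2 + (b - 1/2))) {0..b}"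
    by (rule has_integral_combine[OF _ b i1 i2]) simp
  then have "integral {0..b} (\<lambda>y. cdfG (Gp p) y) = p/2 + (b - 1/2)" by (simp add: integral_unique)
  moreover have "cdfG (Gp p) b = 1" using b by (simp add: Gp_cdf[OF p])
  ultimately show ?thesis unfolding rew_def by simp
qed

lemma sqrt_lb:
  fixes x e :: real
  assumes "0 \<le> e" "e \<le> x" "0 < x"
  shows "x - e^2/x \<le> sqrt (x^2 - e^2)"
proof -
  define r where "r = e^2/x"
  have rx: "r * x = e^2" unfolding r_def using assms by simp
  have r0: "0 \<le> r" unfolding r_def using assms by simp
  have "e^2 \<le> x^2" using assms by (intro power_mono) auto
  then have rle: "r \<le> x" unfolding r_def using assms by (simp add: divide_le_eq power2_eq_square)
  have "r * r \<le> r * x" using r0 rle by (intro mult_left_mono)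
  then have "(x - r)^2 \<le> x^2 - e^2" using rx by (simp add: power2_eq_square algebra_simps)
  then have "x - r \<le> sqrt (x^2 - e^2)" by (intro real_le_rsqrt)
  then show ?thesis unfolding r_def .
qed

lemma rew_low_le:
  fixes \<alpha> p b :: real
  assumes a: "0 \<le> \<alpha>" "\<alpha> < 1" and p: "0 \<le> p" "p \<le> 1" and b: "0 \<le> b" "b < 1/2"
  shows "rew (Gp p) 1 b \<alpha> = p - (1 - \<alpha>) * p * b" and "rew (Gp p) 1 b \<alpha> \<le> p"
    and "0 < p \<Longrightarrow> 0 < b \<Longrightarrow> rew (Gp p) 1 b \<alpha> < p"
proof -
  show e: "rew (Gp p) 1 b \<alpha> = p - (1 - \<alpha>) * p * b"
    using Gp_rew_low[OF p b] by (simp add: algebra_simps)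
  have "0 \<le> (1 - \<alpha>) * p * b" using a p b by simp
  then show "rew (Gp p) 1 b \<alpha> \<le> p" using e by linarith
  assume "0 < p" "0 < b"
  then have "0 < (1 - \<alpha>) * p * b" using a by simp
  then show "rew (Gp p) 1 b \<alpha> < p" using e by linarith
qed

lemma rew_high_eq:
  fixes \<alpha> p b :: real
  assumes p: "0 \<le> p" "p \<le> 1" and b: "1/2 \<le> b"
  shows "rew (Gp p) 1 b \<alpha> = (1/2 + \<alpha> * p / 2) - (1 - \<alpha>) * (b - 1/2)"
proof -
  have "\<alpha> * (p / 2 + (b - 1/2)) = \<alpha> * p / 2 + \<alpha> * b - \<alpha> / 2" by (simp add: algebra_simps)
  moreover have "(1 - \<alpha>) * (b - 1/2) = b - \<alpha> * b - 1/2 + \<alpha> / 2" by (simp add: field_simps)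
  ultimately show ?thesis using Gp_rew_high[OF p b, of \<alpha>] by linarith
qed

lemma G1_facts:
  fixes \<alpha> ps p :: real
  assumes a: "0 \<le> \<alpha>" "\<alpha> < 1" and ps: "ps * (2 - \<alpha>) = 1" and p: "ps < p" "p \<le> 1"
  shows "bstar (Gp p) 1 \<alpha> = 0"
    and "\<And>b. 1/2 \<le> b \<Longrightarrow> (p - ps)/2 \<le> rew (Gp p) 1 0 \<alpha> - rew (Gp p) 1 b \<alpha>"
proof -
  have ps': "ps = 1 / (2 - \<alpha>)" using ps a by (simp add: eq_divide_eq)
  have ps0: "0 < ps" using a by (simp add: ps')
  have p0: "0 < p" "0 \<le> p" using ps0 p by auto
  have r0: "rew (Gp p) 1 0 \<alpha> = p" using rew_low_le(1)[OF a p0(2) p(2), of 0] by simp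
  have hi: "(p - ps)/2 \<le> rew (Gp p) 1 0 \<alpha> - rew (Gp p) 1 b \<alpha>" if b: "1/2 \<le> b" for b
  proof -
    have k: "ps - 1 = ps * (\<alpha> - 1)" using ps by (simp add: algebra_simps)
    have "0 \<le> (1 - \<alpha>) * (b - 1/2)" using a b by simp
    moreover have "0 \<le> (1 - \<alpha>) * (p - ps)" using a p by simp
    moreover have "(1 - \<alpha>) * (b - 1/2) = b - \<alpha> * b - 1/2 + \<alpha> / 2" by (simp add: field_simps)
    moreover have "(1 - \<alpha>) * (p - ps) = p - \<alpha> * p - ps + \<alpha> * ps" by (simp add: algebra_simps)
    moreover have "ps * (\<alpha> - 1) = \<alpha> * ps - ps" by (simp add: algebra_simps)
    ultimately show ?thesis unfolding r0 rew_high_eq[OF p0(2) p(2) b]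
      using k by (simp add: field_simps)
  qed
  then show "\<And>b. 1/2 \<le> b \<Longrightarrow> (p - ps)/2 \<le> rew (Gp p) 1 0 \<alpha> - rew (Gp p) 1 b \<alpha>" .
  have lt: "rew (Gp p) 1 b \<alpha> < p" if "0 < b" for b
  proof (cases "b < 1/2")
    case True then show ?thesis using rew_low_le(3)[OF a p0(2) p(2)] p0 that by simp
  next
    case False then have "(p - ps)/2 \<le> p - rew (Gp p) 1 b \<alpha>" using hi r0 by simp
    then show ?thesis using p by (simp add: field_simps)
  qed
  show "bstar (Gp p) 1 \<alpha> = 0"
    unfolding bstar_def
  proof (rule Greatest_equality)
    show "0 \<le> (0::real) \<and> (\<forall>b'\<ge>0. rew (Gp p) 1 b' \<alpha> \<le> rew (Gp p) 1 0 \<alpha>)"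
      using lt r0 by (auto simp: le_less)
    fix y assume "0 \<le> y \<and> (\<forall>b'\<ge>0. rew (Gp p) 1 b' \<alpha> \<le> rew (Gp p) 1 y \<alpha>)"
    then show "y \<le> 0" using lt[of y] r0 by force
  qed
qed

lemma G2_facts:
  fixes \<alpha> ps p :: real
  assumes a: "0 \<le> \<alpha>" "\<alpha> < 1" and ps: "ps * (2 - \<alpha>) = 1" and p: "0 \<le> p" "p < ps"
  shows "bstar (Gp p) 1 \<alpha> = 1/2"
    and "\<And>b. 0 \<le> b \<Longrightarrow> b < 1/2 \<Longrightarrow> (ps - p)/2 \<le> rew (Gp p) 1 (1/2) \<alpha> - rew (Gp p) 1 b \<alpha>"
proof -
  have ps': "ps = 1 / (2 - \<alpha>)" using ps a by (simp add: eq_divide_eq)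
  have ps1: "ps \<le> 1" using a by (simp add: ps' divide_le_eq)
  have p1: "p \<le> 1" using p ps1 by simp
  have rh: "rew (Gp p) 1 (1/2) \<alpha> = 1/2 + \<alpha> * p / 2" using rew_high_eq[OF p(1) p1, of "1/2"] by simp
  have gap: "(ps - p)/2 \<le> rew (Gp p) 1 (1/2) \<alpha> - p"
  proof -
    have k: "ps - 1 = ps * (\<alpha> - 1)" using ps by (simp add: algebra_simps)
    have "0 \<le> (1 - \<alpha>) * (ps - p)" using a p by simp
    moreover have "(1 - \<alpha>) * (ps - p) = ps - \<alpha> * ps - p + \<alpha> * p" by (simp add: algebra_simps)
    moreover have "ps * (\<alpha> - 1) = \<alpha> * ps - ps" by (simp add: algebra_simps)
    ultimately show ?thesis unfolding rh using k by (simp add: field_simps)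
  qed
  have lo: "(ps - p)/2 \<le> rew (Gp p) 1 (1/2) \<alpha> - rew (Gp p) 1 b \<alpha>" if "0 \<le> b" "b < 1/2" for b
    using rew_low_le(2)[OF a p(1) p1 that] gap by linarith
  then show "\<And>b. 0 \<le> b \<Longrightarrow> b < 1/2 \<Longrightarrow> (ps - p)/2 \<le> rew (Gp p) 1 (1/2) \<alpha> - rew (Gp p) 1 b \<alpha>" .
  have lt: "rew (Gp p) 1 b \<alpha> < rew (Gp p) 1 (1/2) \<alpha>" if "0 \<le> b" "b \<noteq> 1/2" for b
  proof (cases "b < 1/2")
    case True then have "(ps - p)/2 \<le> rew (Gp p) 1 (1/2) \<alpha> - rew (Gp p) 1 b \<alpha>" using lo[OF that(1)] by simp
    then show ?thesis using p by (simp add: field_simps)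
  next
    case False
    then have "1/2 < b" using that by simp
    then have "0 < (1 - \<alpha>) * (b - 1/2)" using a by simp
    then show ?thesis using rew_high_eq[OF p(1) p1, of b] rh \<open>1/2 < b\<close> by simp
  qed
  show "bstar (Gp p) 1 \<alpha> = 1/2"
    unfolding bstar_def
  proof (rule Greatest_equality)
    show "0 \<le> (1/2::real) \<and> (\<forall>b'\<ge>0. rew (Gp p) 1 b' \<alpha> \<le> rew (Gp p) 1 (1/2) \<alpha>)"
    proof (intro conjI allI impI)
      fix b' :: real assume "0 \<le> b'"
      then show "rew (Gp p) 1 b' \<alpha> \<le> rew (Gp p) 1 (1/2) \<alpha>"
      proof (cases "b' = 1/2")
        case True then show ?thesis by (metis order_refl)
      next
        case False then show ?thesis using lt[of b'] \<open>0 \<le> b'\<close> by simp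
      qed
    qed simp
    fix y assume "0 \<le> y \<and> (\<forall>b'\<ge>0. rew (Gp p) 1 b' \<alpha> \<le> rew (Gp p) 1 y \<alpha>)"
    then have y0: "0 \<le> y" and ym: "rew (Gp p) 1 (1/2) \<alpha> \<le> rew (Gp p) 1 y \<alpha>" by auto
    show "y \<le> 1/2"
    proof (rule ccontr)
      assume "\<not> y \<le> 1/2"
      then have "y \<noteq> 1/2" by auto
      then show False using lt[OF y0] ym by simp
    qed
  qed
qed

lemma A_sets:
  fixes h :: real
  assumes adm: "admissible_strategy \<pi>" and P: "prob_space G" and S: "sets G = sets borel"
  shows "{\<omega>. h \<le> \<pi> t \<omega>} \<in> sets (env G)" and "{\<omega>. \<pi> t \<omega> < h} \<in> sets (env G)"
proof -
  have mpi: "\<pi> t \<in> borel_measurable (borel \<Otimes>\<^sub>M PiM UNIV (\<lambda>_::nat. borel))"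
    using adm unfolding admissible_strategy_def by blast
  have "\<pi> t -` {h..} \<inter> space (borel \<Otimes>\<^sub>M PiM UNIV (\<lambda>_::nat. borel)) \<in> sets (borel \<Otimes>\<^sub>M PiM UNIV (\<lambda>_::nat. borel))"
    using mpi by (rule measurable_sets) simp
  moreover have "\<pi> t -` {h..} \<inter> space (borel \<Otimes>\<^sub>M PiM UNIV (\<lambda>_::nat. borel)) = {\<omega>. h \<le> \<pi> t \<omega>}"
    by (auto simp: space_pair_measure space_PiM)
  ultimately show "{\<omega>. h \<le> \<pi> t \<omega>} \<in> sets (env G)" using env_facts(1)[OF P S] by simp
  have "\<pi> t -` {..<h} \<inter> space (borel \<Otimes>\<^sub>M PiM UNIV (\<lambda>_::nat. borel)) \<in> sets (borel \<Otimes>\<^sub>M PiM UNIV (\<lambda>_::nat. borel))"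
    using mpi by (rule measurable_sets) simp
  moreover have "\<pi> t -` {..<h} \<inter> space (borel \<Otimes>\<^sub>M PiM UNIV (\<lambda>_::nat. borel)) = {\<omega>. \<pi> t \<omega> < h}"
    by (auto simp: space_pair_measure space_PiM)
  ultimately show "{\<omega>. \<pi> t \<omega> < h} \<in> sets (env G)" using env_facts(1)[OF P S] by simp
qed

lemma regret_G1:
  fixes \<alpha> ps p :: real
  assumes adm: "admissible_strategy \<pi>"
    and a: "0 \<le> \<alpha>" "\<alpha> < 1" and ps: "ps * (2 - \<alpha>) = 1" and p: "ps < p" "p \<le> 1"
  shows "(\<Sum>t<T. ennreal ((p - ps)/2) * emeasure (env (Gp p)) {\<omega>. 1/2 \<le> \<pi> t \<omega>}) \<le> regret \<pi> (Gp p) \<alpha> T"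
  unfolding regret_def
proof (rule sum_mono)
  fix t
  have As: "{\<omega>. 1/2 \<le> \<pi> t \<omega>} \<in> sets (env (Gp p))" by (rule A_sets(1)[OF adm Gp_prob Gp_sets])
  have "ennreal ((p - ps)/2) * emeasure (env (Gp p)) {\<omega>. 1/2 \<le> \<pi> t \<omega>}
      = (\<integral>\<^sup>+\<omega>. ennreal ((p - ps)/2) * indicator {\<omega>. 1/2 \<le> \<pi> t \<omega>} \<omega> \<partial>env (Gp p))"
    by (rule nn_integral_cmult_indicator[symmetric, OF As])
  also have "\<dots> \<le> (\<integral>\<^sup>+\<omega>. ennreal (rew (Gp p) 1 (bstar (Gp p) 1 \<alpha>) \<alpha> - rew (Gp p) 1 (\<pi> t \<omega>) \<alpha>) \<partial>env (Gp p))"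
  proof (rule nn_integral_mono)
    fix \<omega>
    show "ennreal ((p - ps)/2) * indicator {\<omega>. 1/2 \<le> \<pi> t \<omega>} \<omega>
          \<le> ennreal (rew (Gp p) 1 (bstar (Gp p) 1 \<alpha>) \<alpha> - rew (Gp p) 1 (\<pi> t \<omega>) \<alpha>)"
    proof (cases "1/2 \<le> \<pi> t \<omega>")
      case True
      then show ?thesis using G1_facts[OF a ps p] by (simp add: ennreal_leI)
    qed simp
  qed
  finally show "ennreal ((p - ps)/2) * emeasure (env (Gp p)) {\<omega>. 1/2 \<le> \<pi> t \<omega>}
      \<le> (\<integral>\<^sup>+\<omega>. ennreal (rew (Gp p) 1 (bstar (Gp p) 1 \<alpha>) \<alpha> - rew (Gp p) 1 (\<pi> t \<omega>) \<alpha>) \<partial>env (Gp p))" .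
qed

lemma regret_G2:
  fixes \<alpha> ps p :: real
  assumes adm: "admissible_strategy \<pi>"
    and a: "0 \<le> \<alpha>" "\<alpha> < 1" and ps: "ps * (2 - \<alpha>) = 1" and p: "0 \<le> p" "p < ps"
  shows "(\<Sum>t<T. ennreal ((ps - p)/2) * emeasure (env (Gp p)) {\<omega>. \<pi> t \<omega> < 1/2}) \<le> regret \<pi> (Gp p) \<alpha> T"
  unfolding regret_def
proof (rule sum_mono)
  fix t
  have As: "{\<omega>. \<pi> t \<omega> < 1/2} \<in> sets (env (Gp p))" by (rule A_sets(2)[OF adm Gp_prob Gp_sets])
  have nn: "0 \<le> \<pi> t \<omega>" for \<omega> using adm unfolding admissible_strategy_def by (cases \<omega>) auto
  have "ennreal ((ps - p)/2) * emeasure (env (Gp p)) {\<omega>. \<pi> t \<omega> < 1/2}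
      = (\<integral>\<^sup>+\<omega>. ennreal ((ps - p)/2) * indicator {\<omega>. \<pi> t \<omega> < 1/2} \<omega> \<partial>env (Gp p))"
    by (rule nn_integral_cmult_indicator[symmetric, OF As])
  also have "\<dots> \<le> (\<integral>\<^sup>+\<omega>. ennreal (rew (Gp p) 1 (bstar (Gp p) 1 \<alpha>) \<alpha> - rew (Gp p) 1 (\<pi> t \<omega>) \<alpha>) \<partial>env (Gp p))"
  proof (rule nn_integral_mono)
    fix \<omega>
    show "ennreal ((ps - p)/2) * indicator {\<omega>. \<pi> t \<omega> < 1/2} \<omega>
          \<le> ennreal (rew (Gp p) 1 (bstar (Gp p) 1 \<alpha>) \<alpha> - rew (Gp p) 1 (\<pi> t \<omega>) \<alpha>)"
    proof (cases "\<pi> t \<omega> < 1/2")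
      case True
      have e: "bstar (Gp p) 1 \<alpha> = 1/2" by (rule G2_facts(1)[OF a ps p])
      have "(ps - p)/2 \<le> rew (Gp p) 1 (1/2) \<alpha> - rew (Gp p) 1 (\<pi> t \<omega>) \<alpha>"
        by (rule G2_facts(2)[OF a ps p nn True])
      then have "ennreal ((ps - p)/2) \<le> ennreal (rew (Gp p) 1 (bstar (Gp p) 1 \<alpha>) \<alpha> - rew (Gp p) 1 (\<pi> t \<omega>) \<alpha>)"
        unfolding e by (rule ennreal_leI)
      then show ?thesis using True by simp
    qed simp
  qed
  finally show "ennreal ((ps - p)/2) * emeasure (env (Gp p)) {\<omega>. \<pi> t \<omega> < 1/2}
      \<le> (\<integral>\<^sup>+\<omega>. ennreal (rew (Gp p) 1 (bstar (Gp p) 1 \<alpha>) \<alpha> - rew (Gp p) 1 (\<pi> t \<omega>) \<alpha>) \<partial>env (Gp p))" .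
qed

lemma round_bound:
  fixes p1 p2 \<rho> :: real
  assumes adm: "admissible_strategy \<pi>"
    and p1: "0 \<le> p1" "p1 \<le> 1" and p2: "0 \<le> p2" "p2 \<le> 1"
    and rho: "\<rho> = sqrt (p1 * p2) + sqrt ((1 - p1) * (1 - p2))"
  shows "ennreal (\<rho> ^ (2*t) / 2) \<le> emeasure (env (Gp p1)) {\<omega>. 1/2 \<le> \<pi> t \<omega>} + emeasure (env (Gp p2)) {\<omega>. \<pi> t \<omega> < 1/2}"
proof (rule env_bound[OF adm Gp_prob Gp_prob Gp_sets Gp_sets])
  fix B :: "(nat \<Rightarrow> real) set" assume Bm: "B \<in> sets (PiM UNIV (\<lambda>_::nat. borel))"
    and dep: "\<And>d d' :: nat \<Rightarrow> real. (\<forall>s<t. d s = d' s) \<Longrightarrow> d \<in> B \<Longrightarrow> d' \<in> B"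
  define D where "D = {0, 1/2::real}"
  define a where "a y = measure (Gp p1) {y}" for y
  define b where "b y = measure (Gp p2) {y}" for y
  have a0: "a 0 = p1" "a (1/2) = 1 - p1" unfolding a_def using p1 by (simp_all add: Gp_measure)
  have b0: "b 0 = p2" "b (1/2) = 1 - p2" unfolding b_def using p2 by (simp_all add: Gp_measure)
  have an: "0 \<le> a y" "0 \<le> b y" for y unfolding a_def b_def by simp_all
  have finD: "finite D" unfolding D_def by simp
  have sD: "(\<Sum>y\<in>D. f y) = f 0 + f (1/2)" for f :: "real \<Rightarrow> real" unfolding D_def by simp
  have "\<rho> ^ (2*t) \<le> 2 * (\<Sum>x\<in>PiE {..<t} (\<lambda>_. D). min (\<Prod>s<t. a (x s)) (\<Prod>s<t. b (x s)))"
  proof -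
    have "(\<Sum>y\<in>D. sqrt (a y * b y)) ^ (2*t) \<le> 2 * (\<Sum>x\<in>PiE {..<t} (\<lambda>_. D). min (\<Prod>s<t. a (x s)) (\<Prod>s<t. b (x s)))"
      by (rule comb_bound[OF finD]) (auto simp: D_def a0 b0 p1 p2 sD an)
    moreover have "(\<Sum>y\<in>D. sqrt (a y * b y)) = \<rho>" by (simp add: sD a0 b0 rho)
    ultimately show ?thesis by simp
  qed
  also have "(\<Sum>x\<in>PiE {..<t} (\<lambda>_. D). min (\<Prod>s<t. a (x s)) (\<Prod>s<t. b (x s)))
     \<le> measure (PiM UNIV (\<lambda>_. Gp p1)) B + measure (PiM UNIV (\<lambda>_. Gp p2)) (UNIV - B)"
    unfolding a_def b_def by (rule cyl_bound[OF Gp_prob Gp_prob Gp_sets Gp_sets finD Bm dep])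
  finally show "\<rho> ^ (2*t) / 2 \<le> measure (PiM UNIV (\<lambda>_. Gp p1)) B + measure (PiM UNIV (\<lambda>_. Gp p2)) (UNIV - B)"
    by simp
qed

lemma param_facts:
  fixes \<alpha> :: real and T :: nat
  assumes a: "0 \<le> \<alpha>" "\<alpha> < 1" and T: "0 < T"
  defines "\<epsilon> \<equiv> (1 - \<alpha>) / (8 * sqrt (real T))" and "ps \<equiv> 1 / (2 - \<alpha>)"
  shows "0 < \<epsilon>" "ps + \<epsilon> \<le> 1" "0 \<le> ps - \<epsilon>" "ps * (2 - \<alpha>) = 1"
    and "1 - (sqrt ((ps + \<epsilon>) * (ps - \<epsilon>)) + sqrt ((1 - (ps + \<epsilon>)) * (1 - (ps - \<epsilon>)))) \<le> 1 / (16 * real T)"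
proof -
  have sT: "1 \<le> sqrt (real T)" using T by simp
  have sT2: "sqrt (real T) ^ 2 = real T" by simp
  have a2: "0 < 2 - \<alpha>" using a by simp
  show e0: "0 < \<epsilon>" unfolding \<epsilon>_def using a sT by simp
  have e1: "\<epsilon> \<le> (1 - \<alpha>) / 8" unfolding \<epsilon>_def using a sT
    by (intro divide_left_mono) auto
  show pse: "ps * (2 - \<alpha>) = 1" unfolding ps_def using a2 by simp
  define q where "q = 1 - ps"
  have qe: "q = (1 - \<alpha>) / (2 - \<alpha>)" unfolding q_def ps_def using a2 by (simp add: field_simps)
  have q1: "(1 - \<alpha>) / 2 \<le> q" unfolding qe using a by (intro divide_left_mono) auto
  have ps1: "1/2 \<le> ps" unfolding ps_def using a a2 by (simp add: field_simps)
  show "ps + \<epsilon> \<le> 1" using e1 q1 a unfolding q_def by (simp add: field_simps)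
  show "0 \<le> ps - \<epsilon>" using e1 ps1 a by (simp add: field_simps)
  have eq: "0 < q" using q1 a by (smt (verit) divide_pos_pos)
  have l1: "ps - \<epsilon>^2/ps \<le> sqrt (ps^2 - \<epsilon>^2)"
    by (rule sqrt_lb) (use e0 e1 ps1 a in auto)
  have l2: "q - \<epsilon>^2/q \<le> sqrt (q^2 - \<epsilon>^2)"
    by (rule sqrt_lb) (use e0 e1 q1 eq in auto)
  have m1: "(ps + \<epsilon>) * (ps - \<epsilon>) = ps^2 - \<epsilon>^2" by (simp add: algebra_simps power2_eq_square)
  have m2: "(1 - (ps + \<epsilon>)) * (1 - (ps - \<epsilon>)) = q^2 - \<epsilon>^2" unfolding q_def by (simp add: algebra_simps power2_eq_square)
  have d1: "\<epsilon>^2/ps \<le> 2 * \<epsilon>^2"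
  proof -
    have "\<epsilon>^2/ps \<le> \<epsilon>^2/(1/2)" using ps1 by (intro divide_left_mono) auto
    then show ?thesis by simp
  qed
  have d2: "\<epsilon>^2/q \<le> 2 * \<epsilon>^2 / (1 - \<alpha>)"
  proof -
    have "\<epsilon>^2/q \<le> \<epsilon>^2/((1 - \<alpha>)/2)" using q1 a by (intro divide_left_mono) auto
    then show ?thesis by (simp add: mult.commute)
  qed
  have esq: "\<epsilon>^2 = (1 - \<alpha>)^2 / (64 * real T)"
    unfolding \<epsilon>_def by (simp add: power_divide power_mult_distrib)
  have d3: "2 * \<epsilon>^2 \<le> 1 / (32 * real T)"
  proof -
    have "(1 - \<alpha>)^2 \<le> 1" using a by (simp add: power_le_one)
    then have "(1 - \<alpha>)^2 / (64 * real T) \<le> 1 / (64 * real T)" using T by (intro divide_right_mono) auto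
    then show ?thesis unfolding esq by simp
  qed
  have d4: "2 * \<epsilon>^2 / (1 - \<alpha>) \<le> 1 / (32 * real T)"
  proof -
    have "2 * \<epsilon>^2 / (1 - \<alpha>) = (1 - \<alpha>) / (32 * real T)" unfolding esq using a T by (simp add: power2_eq_square field_simps)
    also have "\<dots> \<le> 1 / (32 * real T)" using a T by (intro divide_right_mono) auto
    finally show ?thesis .
  qed
  have "1 / (32 * real T) + 1 / (32 * real T) = 1 / (16 * real T)" by simp
  then show "1 - (sqrt ((ps + \<epsilon>) * (ps - \<epsilon>)) + sqrt ((1 - (ps + \<epsilon>)) * (1 - (ps - \<epsilon>)))) \<le> 1 / (16 * real T)"
    unfolding m1 m2 using l1 l2 d1 d2 d3 d4 unfolding q_def by (simp add: field_simps)
qed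

lemma pow_bound:
  fixes \<rho> :: real and t T :: nat
  assumes "0 \<le> \<rho>" "1 - \<rho> \<le> 1 / (16 * real T)" "t < T"
  shows "1/4 \<le> \<rho> ^ (2*t) / 2"
proof -
  have "1 + real (2*t) * (\<rho> - 1) \<le> (1 + (\<rho> - 1)) ^ (2*t)"
    by (rule Bernoulli_inequality) (use assms in simp)
  then have B: "1 - real (2*t) * (1 - \<rho>) \<le> \<rho> ^ (2*t)" by (simp add: algebra_simps)
  have T0: "0 < real T" using assms by simp
  have "real (2*t) * (1 - \<rho>) \<le> real (2*t) * (1 / (16 * real T))"
    using assms by (intro mult_left_mono) auto
  also have "\<dots> \<le> real (2*T) * (1 / (16 * real T))"
    using assms by (intro mult_right_mono) auto
  also have "\<dots> = 1/8" using T0 by simp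
  finally show ?thesis using B by (simp add: field_simps)
qed

lemma ennreal_half_le:
  fixes x S :: ennreal
  assumes "x + x \<le> S + S" shows "x \<le> S"
proof -
  have "2 * x \<le> 2 * S" using assms by (simp add: mult_2)
  then show ?thesis by (subst (asm) ennreal_mult_le_mult_iff) auto
qed

theorem lemma4:
  shows "\<exists>c>0. \<forall>(\<alpha>0::real) (T::nat). 0 \<le> \<alpha>0 \<and> \<alpha>0 \<le> 1 \<longrightarrow>
           ennreal (c * (1 - \<alpha>0) * sqrt (real T))
             \<le> (INF \<pi>\<in>{\<pi>. admissible_strategy \<pi>}. SUP G\<in>comp_dists. regret \<pi> G \<alpha>0 T)"
proof (intro exI[of _ "1/128"] conjI allI impI)
  show "(0::real) < 1/128" by simp
  fix \<alpha> :: real and T :: nat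
  assume aa: "0 \<le> \<alpha> \<and> \<alpha> \<le> 1"
  show "ennreal (1/128 * (1 - \<alpha>) * sqrt (real T))
             \<le> (INF \<pi>\<in>{\<pi>. admissible_strategy \<pi>}. SUP G\<in>comp_dists. regret \<pi> G \<alpha> T)"
  proof (cases "\<alpha> = 1 \<or> T = 0")
    case True
    then have z: "1/128 * (1 - \<alpha>) * sqrt (real T) = 0" by auto
    show ?thesis unfolding z by simp
  next
    case False
    then have a: "0 \<le> \<alpha>" "\<alpha> < 1" and T: "0 < T" using aa by auto
    define \<epsilon> where "\<epsilon> = (1 - \<alpha>) / (8 * sqrt (real T))"
    define ps where "ps = 1 / (2 - \<alpha>)"
    define p1 where "p1 = ps + \<epsilon>"
    define p2 where "p2 = ps - \<epsilon>"
    define \<rho> where "\<rho> = sqrt (p1 * p2) + sqrt ((1 - p1) * (1 - p2))"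
    note pf = param_facts[OF a T, folded \<epsilon>_def ps_def]
    have e0: "0 < \<epsilon>" using pf(1) .
    have p1b: "ps < p1" "p1 \<le> 1" "0 \<le> p1" using pf e0 unfolding p1_def by auto
    have p2b: "0 \<le> p2" "p2 < ps" "p2 \<le> 1" using pf e0 unfolding p2_def by auto
    have pse: "ps * (2 - \<alpha>) = 1" using pf(4) .
    have rb: "1 - \<rho> \<le> 1 / (16 * real T)" using pf(5) unfolding \<rho>_def p1_def p2_def .
    have r0: "0 \<le> \<rho>" unfolding \<rho>_def using p1b p2b
      by (intro add_nonneg_nonneg real_sqrt_ge_zero mult_nonneg_nonneg) auto
    have eq: "ennreal (1/128 * (1 - \<alpha>) * sqrt (real T)) = ennreal (real T * \<epsilon> / 16)"
    proof -
      have sT: "0 < sqrt (real T)" using T by simp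
      define s where "s = sqrt (real T)"
      have Ts: "real T = s * s" unfolding s_def by simp
      have s0: "0 < s" unfolding s_def using sT .
      have "real T * \<epsilon> / 16 = s * s * ((1 - \<alpha>) / (8 * s)) / 16"
        unfolding \<epsilon>_def s_def[symmetric] by (simp only: Ts)
      also have "\<dots> = 1/128 * (1 - \<alpha>) * s" using s0 by (simp add: field_simps)
      finally have "real T * \<epsilon> / 16 = 1/128 * (1 - \<alpha>) * sqrt (real T)" unfolding s_def .
      then show ?thesis by (simp only:)
    qed
    show ?thesis
      unfolding eq
    proof (rule INF_greatest)
      fix \<pi> assume "\<pi> \<in> {\<pi>. admissible_strategy \<pi>}"
      then have adm: "admissible_strategy \<pi>" by simp
      define S where "S = (SUP G\<in>comp_dists. regret \<pi> G \<alpha> T)"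
      define P1 where "P1 t = emeasure (env (Gp p1)) {\<omega>. 1/2 \<le> \<pi> t \<omega>}" for t
      define P2 where "P2 t = emeasure (env (Gp p2)) {\<omega>. \<pi> t \<omega> < 1/2}" for t
      have R1: "(\<Sum>t<T. ennreal (\<epsilon>/2) * P1 t) \<le> regret \<pi> (Gp p1) \<alpha> T"
        using regret_G1[OF adm a pse p1b(1,2), of T] unfolding P1_def p1_def by simp
      have R2: "(\<Sum>t<T. ennreal (\<epsilon>/2) * P2 t) \<le> regret \<pi> (Gp p2) \<alpha> T"
        using regret_G2[OF adm a pse p2b(1,2), of T] unfolding P2_def p2_def by simp
      have S1: "regret \<pi> (Gp p1) \<alpha> T \<le> S" unfolding S_def
        by (rule SUP_upper) (use Gp_comp p1b in auto)
      have S2: "regret \<pi> (Gp p2) \<alpha> T \<le> S" unfolding S_def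
        by (rule SUP_upper) (use Gp_comp p2b in auto)
      have per: "ennreal (\<epsilon>/8) \<le> ennreal (\<epsilon>/2) * (P1 t + P2 t)" if "t < T" for t
      proof -
        have "ennreal (1/4) \<le> ennreal (\<rho> ^ (2*t) / 2)"
          by (rule ennreal_leI) (rule pow_bound[OF r0 rb that])
        also have "\<dots> \<le> P1 t + P2 t" unfolding P1_def P2_def
          by (rule round_bound[OF adm p1b(3,2) p2b(1,3) \<rho>_def])
        finally have "ennreal (\<epsilon>/2) * ennreal (1/4) \<le> ennreal (\<epsilon>/2) * (P1 t + P2 t)"
          by (rule mult_left_mono) simp
        moreover have "ennreal (\<epsilon>/2) * ennreal (1/4) = ennreal (\<epsilon>/8)"
          using e0 by (simp add: ennreal_mult[symmetric])
        ultimately show ?thesis by simp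
      qed
      have "ennreal (real T * \<epsilon> / 16) + ennreal (real T * \<epsilon> / 16) = (\<Sum>t<T. ennreal (\<epsilon>/8))"
        using e0 by (simp add: ennreal_plus[symmetric] ennreal_of_nat_eq_real_of_nat ennreal_mult[symmetric] del: ennreal_plus)
      also have "\<dots> \<le> (\<Sum>t<T. ennreal (\<epsilon>/2) * (P1 t + P2 t))"
        by (rule sum_mono) (use per in auto)
      also have "\<dots> = (\<Sum>t<T. ennreal (\<epsilon>/2) * P1 t) + (\<Sum>t<T. ennreal (\<epsilon>/2) * P2 t)"
        by (simp add: distrib_left sum.distrib)
      also have "\<dots> \<le> S + S" using R1 R2 S1 S2 by (intro add_mono) auto
      finally show "ennreal (real T * \<epsilon> / 16) \<le> S" by (rule ennreal_half_le)
    qed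
  qed
qed

end
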